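(* Let $p>1$, $\alpha\in\mathbb{R}$, let $\psi_1$ and $h$ be as defined below. Then, as $s\to+\infty$: (i) $\displaystyle\frac{1}{\ln(\psi_1^2(s)+2)}=\frac{p-1}{2s}+\frac{\alpha(p-1)\ln s}{2s^2}+O\!\left(\frac1{s^2}\right)$; (ii) $\displaystyle h(s)=\frac1{p-1}\left[1-\frac{\alpha}{s}-\frac{\alpha^2\ln s}{s^2}\right]+O\!\left(\frac1{s^2}\right)$.
   Context: For $T>0$ let $\psi$ be the unique positive solution of $\psi'=\psi^p\ln^\alpha(\psi^2+2)$ with $\psi(t)\to+\infty$ as $t\to T$; set $\psi_1(s)=\psi(T-e^{-s})$ and $h(s)=e^{-s}\psi_1^{p-1}(s)\ln^\alpha(\psi_1^2(s)+2)$. *)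

theory Defs
  imports "HOL-Analysis.Analysis" "HOL-Library.Landau_Symbols"
begin

definition rhs :: "real \<Rightarrow> real \<Rightarrow> real \<Rightarrow> real" where
  "rhs p \<alpha> u = u powr p * (ln (u\<^sup>2 + 2)) powr \<alpha>"

definition psi1 :: "(real \<Rightarrow> real) \<Rightarrow> real \<Rightarrow> real \<Rightarrow> real" where
  "psi1 \<psi> T s = \<psi> (T - exp (- s))"

definition hfun :: "(real \<Rightarrow> real) \<Rightarrow> real \<Rightarrow> real \<Rightarrow> real \<Rightarrow> real \<Rightarrow> real" where
  "hfun \<psi> T p \<alpha> s = exp (- s) * (psi1 \<psi> T s) powr (p - 1) * (ln ((psi1 \<psi> T s)\<^sup>2 + 2)) powr \<alpha>"

end

theory Submission
  imports Defs "HOL-Real_Asymp.Real_Asymp"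
begin


lemma ln_le_2sqrt: "x > 0 \<Longrightarrow> ln x \<le> 2 * sqrt (x::real)"
proof -
  assume x: "x > 0"
  have "ln (sqrt x) \<le> sqrt x - 1" using x by (intro ln_le_minus_one) simp
  then show ?thesis using ln_sqrt[of x] x by simp
qed

lemma ln_sq_le: "x \<ge> 1 \<Longrightarrow> (ln x)^2 \<le> 4 * (x::real)"
proof -
  assume x: "x \<ge> 1"
  have "0 \<le> ln x" using x by simp
  moreover have "ln x \<le> 2 * sqrt x" using x by (intro ln_le_2sqrt) simp
  ultimately have "(ln x)^2 \<le> (2 * sqrt x)^2" by (intro power_mono) auto
  also have "\<dots> = 4 * x" using x by (simp add: power_mult_distrib)
  finally show ?thesis .
qed

lemma abs_ln_le2: "1/2 \<le> x \<Longrightarrow> x \<le> 3 \<Longrightarrow> \<bar>ln (x::real)\<bar> \<le> 2"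
proof -
  assume a: "1/2 \<le> x" "x \<le> 3"
  have "ln x \<le> x - 1" using a by (intro ln_le_minus_one) simp
  moreover have "ln (1/x) \<le> 1/x - 1" using a by (intro ln_le_minus_one) simp
  moreover have "ln (1/x) = - ln x" using a by (simp add: ln_div)
  moreover have "1/x \<le> 2" using a by (simp add: field_simps)
  ultimately show ?thesis using a by linarith
qed

lemma endgame1_pt:
  fixes c a R s L :: real
  assumes c: "c > 0" and R: "R \<ge> 0" and s1: "s \<ge> 1"
    and LL: "L \<ge> max 1 (max ((8*\<bar>a\<bar>/c)^2) (4*R/c))"
    and E: "\<bar>s - c * L - a * ln L\<bar> \<le> R"
  shows "\<bar>1 / L - (c/s + a*c*ln s/s^2)\<bar> \<le>
           (4*a^2 + \<bar>a\<bar>*(R + \<bar>a\<bar>*(\<bar>ln (2/(3*c))\<bar> + \<bar>ln (2/c)\<bar>)) + (R + \<bar>a\<bar>*(\<bar>ln (2/(3*c))\<bar> + \<bar>ln (2/c)\<bar>))) * (3*c/2) / s^2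
         \<and> 1 / L \<le> (3*c/2) / s"
proof -
  define M where "M = \<bar>ln (2/(3*c))\<bar> + \<bar>ln (2/c)\<bar>"
  define R' where "R' = R + \<bar>a\<bar>*M"
  define K0 where "K0 = 4*a^2 + \<bar>a\<bar>*R' + R'"
  have L1: "L \<ge> 1" using LL by simp
  have Lp: "L > 0" using L1 by simp
  have "8*\<bar>a\<bar>/c \<le> sqrt L"
  proof -
    have "sqrt ((8*\<bar>a\<bar>/c)^2) \<le> sqrt L" using LL by (intro real_sqrt_le_mono) simp
    then show ?thesis using c by simp
  qed
  then have aa: "\<bar>a\<bar> \<le> c/8 * sqrt L" using c by (simp add: field_simps)
  have lnL: "0 \<le> ln L" "ln L \<le> 2 * sqrt L" using L1 Lp ln_le_2sqrt by auto
  have "\<bar>a * ln L\<bar> = \<bar>a\<bar> * ln L" using lnL by (simp add: abs_mult)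
  also have "\<dots> \<le> (c/8 * sqrt L) * (2 * sqrt L)" using aa lnL by (intro mult_mono) auto
  also have "\<dots> = c * L / 4" using Lp by (simp add: power2_eq_square[symmetric])
  finally have t1: "\<bar>a * ln L\<bar> \<le> c * L / 4" .
  have t2: "R \<le> c * L / 4" using LL c by (simp add: field_simps)
  have sb: "c*L/2 \<le> s" "s \<le> 3*c*L/2" using t1 t2 E by linarith+
  have sp: "s > 0" using s1 by simp
  have invL: "1 / L \<le> (3*c/2) / s" using sb sp Lp c by (simp add: field_simps)
  have r1: "L / s \<le> 2 / c" using sb sp Lp c by (simp add: field_simps)
  have r2: "2/(3*c) \<le> L / s" using sb sp Lp c by (simp add: field_simps)
  have lq: "ln (L/s) = ln L - ln s" using sp Lp by (simp add: ln_div)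
  have "ln (2/(3*c)) \<le> ln (L/s)" using r2 c sp Lp by simp
  moreover have "ln (L/s) \<le> ln (2/c)" using r1 c sp Lp by simp
  ultimately have dl: "\<bar>ln L - ln s\<bar> \<le> M" unfolding M_def lq by linarith
  define r where "r = s - c*L - a*ln s"
  have "\<bar>a * (ln L - ln s)\<bar> \<le> \<bar>a\<bar> * M" using dl by (simp add: abs_mult mult_left_mono)
  then have rb: "\<bar>r\<bar> \<le> R'" unfolding r_def R'_def using E by (simp add: algebra_simps)
  have R'0: "R' \<ge> 0" unfolding R'_def M_def using R by simp
  have ls1: "0 \<le> ln s" using s1 by simp
  have ls2: "ln s \<le> s" using sp by (rule ln_bound)
  have ls3: "(ln s)^2 \<le> 4 * s" using s1 by (rule ln_sq_le)
  note lsb = ls1 ls2 ls3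
  have cL: "c*L = s - a*ln s - r" unfolding r_def by simp
  have "1/L - (c/s + a*c*ln s/s^2) = (s^2 - (c*L)* s - a*(c*L)*ln s)/(L* s^2)"
    using sp Lp by (simp add: field_simps power2_eq_square)
  also have "\<dots> = (a^2*(ln s)^2 + a*r*ln s + r* s)/(L* s^2)"
    unfolding cL by (simp add: algebra_simps power2_eq_square)
  finally have Deq: "1/L - (c/s + a*c*ln s/s^2) = (a^2*(ln s)^2 + a*r*ln s + r* s)/(L* s^2)" .
  have n1: "\<bar>a^2*(ln s)^2\<bar> \<le> 4*a^2* s" using mult_left_mono[OF ls3, of "a^2"] by (simp add: abs_mult algebra_simps)
  have n2: "\<bar>a*r*ln s\<bar> \<le> \<bar>a\<bar>*R'* s"
  proof -
    have "\<bar>a*r*ln s\<bar> = \<bar>a\<bar>*(\<bar>r\<bar>*ln s)" using lsb by (simp add: abs_mult)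
    also have "\<dots> \<le> \<bar>a\<bar>*(R'* s)" using rb lsb R'0 by (intro mult_left_mono mult_mono) auto
    finally show ?thesis by simp
  qed
  have n3: "\<bar>r* s\<bar> \<le> R'* s" using rb sp by (simp add: abs_mult mult_right_mono)
  have N: "\<bar>a^2*(ln s)^2 + a*r*ln s + r* s\<bar> \<le> K0 * s"
  proof -
    have "K0 * s = 4*a^2* s + \<bar>a\<bar>*R'* s + R'* s" by (simp add: K0_def algebra_simps)
    then show ?thesis using n1 n2 n3 by linarith
  qed
  have K0p: "K0 \<ge> 0" unfolding K0_def using R'0 by simp
  have "\<bar>1/L - (c/s + a*c*ln s/s^2)\<bar> \<le> K0 * s / (L* s^2)"
    unfolding Deq using N Lp sp by (simp add: abs_div divide_right_mono)
  also have "\<dots> = K0 * (1/L) / s" using sp by (simp add: power2_eq_square)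
  also have "\<dots> \<le> K0 * ((3*c/2) / s) / s" using invL K0p sp by (intro divide_right_mono mult_left_mono) auto
  also have "\<dots> = K0 * (3*c/2) / s^2" by (simp add: power2_eq_square)
  finally show ?thesis using invL unfolding K0_def R'_def M_def by simp
qed


definition LL :: "real \<Rightarrow> real" where "LL u = ln (u\<^sup>2 + 2)"
definition Phi :: "real \<Rightarrow> real \<Rightarrow> real \<Rightarrow> real" where
 "Phi p a u = exp ((1-p)*ln u - a*ln (ln (u\<^sup>2 + 2))) * (1 - (2*a/(p-1))/ln (u\<^sup>2 + 2)) / (p-1)"
definition epsf :: "real \<Rightarrow> real \<Rightarrow> real \<Rightarrow> real" where
 "epsf p a u = (2*(2*a/(p-1))*(a+1)/(LL u)\<^sup>2 + (4/(u\<^sup>2+2))*(a/LL u - (2*a/(p-1))*(a+1)/(LL u)\<^sup>2))/(p-1)"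

lemma LL_gt1: "u \<ge> 2 \<Longrightarrow> LL u > 1"
proof -
  assume u: "u \<ge> 2"
  have "(2::real)^2 \<le> u^2" using u by (intro power_mono) auto
  then have h: "exp 1 < u^2 + 2" using exp_le by simp
  have "0 < u^2 + 2" using zero_le_power2[of u] by linarith
  then have "ln (exp 1) < ln (u^2 + 2)" using h by (subst ln_less_cancel_iff) auto
  then show ?thesis unfolding LL_def by simp
qed

lemma alg1:
  fixes e u L p a :: real
  assumes "u \<noteq> 0" "L \<noteq> 0" "u^2+2 \<noteq> 0" "p \<noteq> 1"
  shows "e * ((1 - p) / u - 2 * u * a / (L * (u\<^sup>2 + 2))) * (1 - 2 * a / ((p - 1) * L)) +
        4 * (a * u) * e / ((u\<^sup>2 + 2) * (L * ((p - 1) * L))) =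
    e * (((1-p)/u - a*((2*u)/(u^2+2))/L) * (1 - (2*a/(p-1))/L) + (2*a/(p-1))*((2*u)/(u^2+2))/L^2)"
  using assms by (simp add: field_simps power2_eq_square)

lemma alg2:
  fixes u L p d a :: real
  assumes "u \<noteq> 0" "L \<noteq> 0" "d \<noteq> 0" "p \<noteq> 1" "d = u^2 + 2"
  shows "u * (((1-p)/u - a*((2*u)/d)/L) * (1 - (2*a/(p-1))/L) + (2*a/(p-1))*((2*u)/d)/L^2) / (p-1)
     = -1 + (2*(2*a/(p-1))*(a+1)/L^2 + (4/d)*(a/L - (2*a/(p-1))*(a+1)/L^2))/(p-1)"
proof -
  define q where "q = p - 1"
  have q: "q \<noteq> 0" using assms q_def by simp
  have p: "1 - p = - q" "p - 1 = q" using q_def by simp_all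
  have uu: "u * u = d - 2" using assms by (simp add: power2_eq_square)
  have "u * ((( - q)/u - a*((2*u)/d)/L) * (1 - (2*a/q)/L) + (2*a/q)*((2*u)/d)/L^2) / q
     = -1 + (2*(2*a/q)*(a+1)/L^2 + (4/d)*(a/L - (2*a/q)*(a+1)/L^2))/q"
    using assms(1-3) q apply (simp add: field_simps power2_eq_square)
    apply (simp only: assms(5) power2_eq_square)
    apply algebra
    done
  then show ?thesis unfolding p .
qed

lemma deriv_Phi:
  assumes p: "p > 1" and u: "u \<ge> 2"
  shows "(Phi p a has_real_derivative ((-1 + epsf p a u) / (u powr p * (ln (u\<^sup>2 + 2)) powr a))) (at u)"
proof -
  define L where "L = ln (u\<^sup>2 + 2)"
  have L1: "L > 1" using LL_gt1[OF u] unfolding LL_def L_def .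
  have u0: "u > 0" using u by simp
  have d2: "u^2 + 2 > 0" using zero_le_power2[of u] by linarith
  define k where "k = 2*a/(p-1)"
  define E where "E = exp ((1-p)*ln u - a*ln L)"
  define X where "X = ((1-p)/u - a*((2*u)/(u^2+2))/L) * (1 - k/L) + k*((2*u)/(u^2+2))/L^2"
  have d: "(Phi p a has_real_derivative E * X / (p-1)) (at u)"
    unfolding Phi_def
    using u0 L1 p unfolding L_def
    apply (auto intro!: derivative_eq_intros simp: add_pos_pos)
    subgoal using zero_le_power2[of u] by linarith
    unfolding E_def X_def k_def L_def
    apply (rule alg1)
    using u0 L1 p by (auto simp: L_def)
  have rhs: "u powr p * L powr a = exp (p * ln u + a * ln L)"
    using u0 L1 by (simp add: powr_def exp_add)
  have EE: "E * (u powr p * L powr a) = u"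
    unfolding rhs E_def using u0 by (simp add: exp_add[symmetric] algebra_simps)
  have pos: "u powr p * L powr a > 0" using u0 L1 by simp
  have key: "u * X / (p-1) = -1 + epsf p a u"
    unfolding X_def epsf_def LL_def L_def[symmetric] k_def
    by (rule alg2) (use u0 L1 p d2 in \<open>auto\<close>)
  define R where "R = u powr p * L powr a"
  have E2: "E = u / R"
  proof -
    have Rp: "R > 0" using pos R_def by simp
    have "E = E * R / R" using Rp by simp
    then show ?thesis using EE R_def by simp
  qed
  have "E * X / (p-1) = (u * X / (p-1)) / R" unfolding E2 by simp
  also have "\<dots> = (-1 + epsf p a u) / R" unfolding key ..
  finally have "E * X / (p-1) = (-1 + epsf p a u) / (u powr p * L powr a)" unfolding R_def .
  then show ?thesis using d L_def by simp
qed


definition C0 :: "real \<Rightarrow> real \<Rightarrow> real" where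
  "C0 p a = (2*\<bar>2*a/(p-1)*(a+1)\<bar> + 16*(\<bar>a\<bar> + \<bar>2*a/(p-1)*(a+1)\<bar>))/(p-1)"

lemma div16: "(16::real)/(4*y) = 4/y" by simp

lemma C0_nonneg: "p > 1 \<Longrightarrow> C0 p a \<ge> 0"
  unfolding C0_def by simp

lemma eps_bound:
  assumes p: "p > 1" and u: "u \<ge> 2"
  shows "\<bar>epsf p a u\<bar> \<le> C0 p a / (LL u)^2"
proof -
  define L where "L = LL u"
  define k where "k = 2*a/(p-1)"
  define B where "B = \<bar>k*(a+1)\<bar>"
  define e where "e = 4/(u^2+2)"
  have L1: "L \<ge> 1" using LL_gt1[OF u] L_def by simp
  have d2: "u^2 + 2 \<ge> 1" using zero_le_power2[of u] by linarith
  have Lsq: "L^2 \<le> 4*(u^2+2)" unfolding L_def LL_def using d2 by (rule ln_sq_le)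
  have a1: "0 < 4*(u^2+2)" by (intro mult_pos_pos add_nonneg_pos) auto
  have a2: "0 < L^2" using L1 by simp
  have "16 / (4*(u^2+2)) \<le> 16 / L^2" by (rule divide_left_mono[OF Lsq _ mult_pos_pos[OF a1 a2]]) simp
  then have e1: "e \<le> 16 / L^2" unfolding e_def by (simp only: div16)
  have e0: "e \<ge> 0" unfolding e_def using d2 by simp
  have iL: "1/L \<le> 1" "1/L^2 \<le> 1" "0 \<le> 1/L" using L1 by (auto simp: field_simps)
  have A: "\<bar>a/L - k*(a+1)/L^2\<bar> \<le> \<bar>a\<bar> + B"
  proof -
    have "\<bar>a/L\<bar> = \<bar>a\<bar> * (1/L)" using L1 by (simp add: abs_div)
    also have "\<dots> \<le> \<bar>a\<bar> * 1" using iL by (intro mult_left_mono) auto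
    finally have 1: "\<bar>a/L\<bar> \<le> \<bar>a\<bar>" by simp
    have "\<bar>k*(a+1)/L^2\<bar> = B * (1/L^2)" unfolding B_def using L1 by (simp add: abs_div)
    also have "\<dots> \<le> B * 1" using iL unfolding B_def by (intro mult_left_mono) auto
    finally have 2: "\<bar>k*(a+1)/L^2\<bar> \<le> B" by simp
    show ?thesis using 1 2 by linarith
  qed
  have Y1: "\<bar>e*(a/L - k*(a+1)/L^2)\<bar> \<le> (16/L^2) * (\<bar>a\<bar> + B)"
    unfolding abs_mult using A e1 e0 by (intro mult_mono) auto
  have X1: "\<bar>2*k*(a+1)/L^2\<bar> = 2*B/L^2" unfolding B_def using L1 by (simp add: abs_div abs_mult)
  have S: "\<bar>2*k*(a+1)/L^2 + e*(a/L - k*(a+1)/L^2)\<bar> \<le> (2*B + 16*(\<bar>a\<bar>+B))/L^2"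
  proof -
    have eqR: "(2*B + 16*(\<bar>a\<bar>+B))/L^2 = 2*B/L^2 + (16/L^2)*(\<bar>a\<bar>+B)" by (simp add: add_divide_distrib)
    show ?thesis unfolding eqR
      by (rule order_trans[OF abs_triangle_ineq add_mono]) (use X1 Y1 in auto)
  qed
  have "epsf p a u = (2*k*(a+1)/L^2 + e*(a/L - k*(a+1)/L^2))/(p-1)"
    unfolding epsf_def k_def e_def L_def by simp
  then have "\<bar>epsf p a u\<bar> = \<bar>2*k*(a+1)/L^2 + e*(a/L - k*(a+1)/L^2)\<bar>/(p-1)" using p by (simp add: abs_div)
  also have "\<dots> \<le> (2*B + 16*(\<bar>a\<bar>+B))/L^2/(p-1)" using S p by (intro divide_right_mono) auto
  also have "\<dots> = C0 p a / L^2" unfolding C0_def B_def k_def by (simp add: field_simps)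
  finally show ?thesis unfolding L_def .
qed



lemma Phi_lim: "p > 1 \<Longrightarrow> (Phi p a \<longlongrightarrow> 0) at_top"
  unfolding Phi_def by real_asymp

lemma rhs_pos: "u > 0 \<Longrightarrow> rhs p a u > 0"
proof -
  assume u: "u > 0"
  have "u^2 + 2 > 1" using zero_le_power2[of u] by linarith
  then have "ln (u^2 + 2) > 0" by simp
  then show ?thesis unfolding rhs_def using u by simp
qed

lemma LL_mono: "0 < u \<Longrightarrow> u \<le> v \<Longrightarrow> LL u \<le> LL v"
proof -
  assume uv: "0 < u" "u \<le> v"
  have "u^2 \<le> v^2" using uv by (intro power_mono) auto
  moreover have "u^2 + 2 > 0" using zero_le_power2[of u] by linarith
  ultimately show ?thesis unfolding LL_def by simp
qed

lemma mvt_bound: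
  fixes \<psi> :: "real \<Rightarrow> real" and T p a t :: real
  assumes p: "p > 1"
    and pos: "\<And>t. t < T \<Longrightarrow> \<psi> t > 0"
    and ode: "\<And>t. t < T \<Longrightarrow> (\<psi> has_real_derivative rhs p a (\<psi> t)) (at t)"
    and blowup: "filterlim \<psi> at_top (at_left T)"
    and t: "t < T" and u2: "\<psi> t \<ge> 2"
  shows "\<bar>Phi p a (\<psi> t) - (T - t)\<bar> \<le> C0 p a / (LL (\<psi> t))^2 * (T - t)"
proof -
  have inc: "\<psi> x < \<psi> y" if xy: "x < y" "y < T" for x y
  proof (rule DERIV_pos_imp_increasing[OF xy(1)])
    fix z assume "x \<le> z" "z \<le> y"
    then have zT: "z < T" using xy by simp
    show "\<exists>d. DERIV \<psi> z :> d \<and> d > 0" using ode[OF zT] rhs_pos[OF pos[OF zT]] by blast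
  qed
  have ge: "\<psi> t \<le> \<psi> x" if "t \<le> x" "x < T" for x
    using inc[of t x] that by (cases "x = t") auto
  define \<delta> where "\<delta> = C0 p a / (LL (\<psi> t))^2"
  have Lt: "LL (\<psi> t) > 1" using LL_gt1[OF u2] .
  have step: "\<bar>Phi p a (\<psi> t) - Phi p a (\<psi> t') - (t' - t)\<bar> \<le> \<delta> * (t' - t)"
    if tt: "t < t'" "t' < T" for t'
  proof -
    have der: "((\<lambda>x. Phi p a (\<psi> x)) has_real_derivative (-1 + epsf p a (\<psi> x))) (at x)"
      if x: "t \<le> x" "x \<le> t'" for x
    proof -
      have xT: "x < T" using x tt by simp
      have u2x: "\<psi> x \<ge> 2" using ge[OF x(1) xT] u2 by simp
      have r: "rhs p a (\<psi> x) > 0" using rhs_pos pos[OF xT] by simp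
      have "((\<lambda>x. Phi p a (\<psi> x)) has_real_derivative
              ((-1 + epsf p a (\<psi> x)) / rhs p a (\<psi> x)) * rhs p a (\<psi> x)) (at x)"
        using DERIV_chain2[OF deriv_Phi[OF p u2x, of a] ode[OF xT]] unfolding rhs_def .
      moreover have "((-1 + epsf p a (\<psi> x)) / rhs p a (\<psi> x)) * rhs p a (\<psi> x) = -1 + epsf p a (\<psi> x)"
        using r by simp
      ultimately show ?thesis by simp
    qed
    obtain z where z: "t < z" "z < t'"
      "Phi p a (\<psi> t') - Phi p a (\<psi> t) = (t' - t) * (-1 + epsf p a (\<psi> z))"
      using MVT2[OF tt(1) der] by blast
    have zT: "z < T" using z tt by simp
    have uz: "\<psi> z \<ge> \<psi> t" using ge[of z] z zT by simp
    have u2z: "\<psi> z \<ge> 2" using uz u2 by simp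
    have LL1: "LL (\<psi> t) \<le> LL (\<psi> z)" using LL_mono[OF _ uz] u2 by simp
    have "(LL (\<psi> t))^2 \<le> (LL (\<psi> z))^2" using LL1 Lt by (intro power_mono) auto
    then have "C0 p a / (LL (\<psi> z))^2 \<le> \<delta>"
      unfolding \<delta>_def using C0_nonneg[OF p, of a] Lt
      by (intro divide_left_mono mult_pos_pos) auto
    then have eb: "\<bar>epsf p a (\<psi> z)\<bar> \<le> \<delta>" using eps_bound[OF p u2z, of a] by simp
    have "Phi p a (\<psi> t) - Phi p a (\<psi> t') - (t' - t) = - ((t' - t) * epsf p a (\<psi> z))"
      using z(3) by (simp add: algebra_simps)
    then have "\<bar>Phi p a (\<psi> t) - Phi p a (\<psi> t') - (t' - t)\<bar> = (t' - t) * \<bar>epsf p a (\<psi> z)\<bar>"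
      using tt by (simp add: abs_mult)
    also have "\<dots> \<le> (t' - t) * \<delta>" using eb tt by (intro mult_left_mono) auto
    finally show ?thesis by (simp add: mult.commute)
  qed
  have lim0: "((\<lambda>t'. Phi p a (\<psi> t')) \<longlongrightarrow> 0) (at_left T)"
    by (rule filterlim_compose[OF Phi_lim[OF p] blowup])
  have l1: "((\<lambda>t'. \<bar>Phi p a (\<psi> t) - Phi p a (\<psi> t') - (t' - t)\<bar>) \<longlongrightarrow> \<bar>Phi p a (\<psi> t) - 0 - (T - t)\<bar>) (at_left T)"
    by (intro tendsto_intros lim0 tendsto_ident_at)
  have l2: "((\<lambda>t'. \<delta> * (t' - t)) \<longlongrightarrow> \<delta> * (T - t)) (at_left T)"
    by (intro tendsto_intros tendsto_ident_at)
  have ev: "eventually (\<lambda>t'. \<bar>Phi p a (\<psi> t) - Phi p a (\<psi> t') - (t' - t)\<bar> \<le> \<delta> * (t' - t)) (at_left T)"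
    using eventually_at_left_real[OF t] by (rule eventually_mono) (intro step; simp)
  have "\<bar>Phi p a (\<psi> t) - 0 - (T - t)\<bar> \<le> \<delta> * (T - t)"
    by (rule tendsto_le[OF trivial_limit_at_left_real l2 l1 ev])
  then show ?thesis unfolding \<delta>_def by simp
qed



lemma lin_aux1: fixes lq s p lu a lL lc lp L r :: real
  shows "lq - s = (1-p)*lu - a*lL + lc - lp \<Longrightarrow> L = 2*lu + r \<Longrightarrow> s - (p-1)/2*L - a*lL = lq - (p-1)/2*r - lc + lp"
  by (simp add: field_simps)

lemma abs4: fixes x y z w A B C :: real
  shows "\<bar>x\<bar> \<le> A \<Longrightarrow> \<bar>y\<bar> \<le> B \<Longrightarrow> \<bar>z\<bar> \<le> C \<Longrightarrow> \<bar>x - y - z + w\<bar> \<le> A + B + C + \<bar>w\<bar>"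
  by linarith

lemma mid_pt:
  fixes p a u s :: real
  assumes p: "p > 1" and u: "u \<ge> 2"
    and LB: "LL u \<ge> 1 + 2*C0 p a + 2*\<bar>2*a/(p-1)\<bar>"
    and M: "\<bar>Phi p a u - exp (-s)\<bar> \<le> C0 p a / (LL u)^2 * exp (-s)"
  shows "\<bar>s - (p-1)/2 * LL u - a * ln (LL u)\<bar> \<le> 4 + (p-1) + \<bar>ln (p-1)\<bar>
     \<and> \<bar>exp (-s) * u powr (p-1) * ln (u^2+2) powr a - (1 - (2*a/(p-1))/LL u)/(p-1)\<bar>
          \<le> 3 * C0 p a / ((p-1) * (LL u)^2)"
proof -
  define L where "L = LL u"
  define k where "k = 2*a/(p-1)"
  define C where "C = C0 p a"
  define \<delta> where "\<delta> = C / L^2"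
  define e where "e = exp (-s)"
  define Cc where "Cc = 1 - k/L"
  define E where "E = exp ((1-p)*ln u - a*ln L)"
  define W where "W = exp ((p-1)*ln u + a*ln L)"
  have C0: "C \<ge> 0" unfolding C_def using C0_nonneg[OF p] .
  have L1: "L \<ge> 1" using LL_gt1[OF u] unfolding L_def by simp
  have Lp: "L > 0" using L1 by simp
  have u0: "u > 0" using u by simp
  have LB': "1 + 2*C + 2*\<bar>k\<bar> \<le> L" using LB unfolding L_def C_def k_def .
  have LL2: "L \<le> L^2" using mult_left_mono[OF L1, of L] Lp by (simp add: power2_eq_square)
  have "C \<le> 1/2 * L^2" using LB' LL2 C0 by simp
  then have d12: "\<delta> \<le> 1/2" unfolding \<delta>_def using Lp by (simp add: pos_divide_le_eq)
  have d0: "\<delta> \<ge> 0" unfolding \<delta>_def using C0 by simp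
  have "\<bar>k\<bar> \<le> 1/2 * L" using LB' C0 by simp
  then have kL: "\<bar>k/L\<bar> \<le> 1/2" using Lp by (simp add: abs_div pos_divide_le_eq)
  have kL2: "k/L \<le> 1/2" "- (k/L) \<le> 1/2" using kL[unfolded abs_le_iff] by auto
  have Cc1: "1/2 \<le> Cc" "Cc \<le> 3/2" unfolding Cc_def using kL2 by linarith+
  have Phi_eq: "Phi p a u = E * Cc / (p-1)"
    unfolding Phi_def E_def Cc_def k_def L_def LL_def by simp
  have EW: "E * W = 1" unfolding E_def W_def exp_add[symmetric] by (simp add: algebra_simps)
  have Wp: "W > 0" unfolding W_def by simp
  have Ep: "E > 0" unfolding E_def by simp
  have Wpow: "u powr (p-1) * ln (u^2+2) powr a = W"
    unfolding W_def exp_add powr_def using u0 Lp unfolding L_def LL_def by (simp add: mult.commute)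
  have e0: "e > 0" unfolding e_def by simp
  have M': "\<bar>Phi p a u - e\<bar> \<le> \<delta> * e" using M unfolding \<delta>_def e_def C_def L_def .
  define h where "h = e * W"
  have hdef: "exp (-s) * u powr (p-1) * ln (u^2+2) powr a = h"
    unfolding h_def e_def using Wpow by (simp add: mult.assoc)
  have "W * Phi p a u = (E * W) * Cc/(p-1)" unfolding Phi_eq by (simp add: ac_simps)
  then have G: "W * Phi p a u = Cc/(p-1)" unfolding EW by simp
  have hG: "h - Cc/(p-1) = W * (e - Phi p a u)" unfolding h_def G[symmetric] by (simp add: algebra_simps)
  have "\<bar>h - Cc/(p-1)\<bar> = W * \<bar>Phi p a u - e\<bar>" unfolding hG using Wp by (simp add: abs_mult abs_minus_commute)
  also have "\<dots> \<le> W * (\<delta> * e)" using M' Wp by (intro mult_left_mono) auto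
  also have "\<dots> = \<delta> * h" unfolding h_def by simp
  finally have hb: "\<bar>h - Cc/(p-1)\<bar> \<le> \<delta> * h" .
  have hp: "h > 0" unfolding h_def using e0 Wp by simp
  have "\<delta> * h \<le> 1/2 * h" using d12 hp by (intro mult_right_mono) auto
  then have "h \<le> 2 * (Cc/(p-1))" using hb by (simp add: abs_le_iff)
  also have "\<dots> = (2*Cc)/(p-1)" by simp
  also have "\<dots> \<le> 3/(p-1)" using Cc1 p by (intro divide_right_mono) auto
  finally have h3: "h \<le> 3/(p-1)" .
  have "\<delta> * h \<le> \<delta> * (3/(p-1))" using h3 d0 by (intro mult_left_mono)
  moreover have "\<delta> * (3/(p-1)) = 3 * C / ((p-1) * L^2)" unfolding \<delta>_def by (simp add: ac_simps)
  ultimately have B: "\<bar>h - Cc/(p-1)\<bar> \<le> 3 * C / ((p-1) * L^2)" using hb by linarith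
  define q where "q = Phi p a u / e"
  have Phiq: "Phi p a u = q * e" unfolding q_def using e0 by simp
  have q1: "1/2 \<le> q" "q \<le> 3"
  proof -
    have "e - \<delta>*e \<le> Phi p a u" "Phi p a u \<le> e + \<delta>*e" using M' by (auto simp: abs_le_iff)
    then have "(1 - \<delta>) * e \<le> q * e" "q * e \<le> (1+\<delta>) * e" unfolding Phiq by (simp_all add: algebra_simps)
    then have "1 - \<delta> \<le> q" "q \<le> 1 + \<delta>" using e0 by simp_all
    then show "1/2 \<le> q" "q \<le> 3" using d12 d0 by simp_all
  qed
  have qp: "q > 0" using q1 by simp
  have lnq: "\<bar>ln q\<bar> \<le> 2" using abs_ln_le2 q1 by simp
  have lnCc: "\<bar>ln Cc\<bar> \<le> 2" using abs_ln_le2 Cc1 by simp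
  have Ccp: "Cc > 0" using Cc1 by simp
  have lnPhi1: "ln (Phi p a u) = ln q - s" unfolding Phiq e_def using qp by (simp add: ln_mult_pos)
  have lnPhi2: "ln (Phi p a u) = (1-p)*ln u - a*ln L + ln Cc - ln (p-1)"
    unfolding Phi_eq E_def using Ccp p by (simp add: ln_mult_pos ln_divide_pos)
  define r2 where "r2 = ln (1 + 2/u^2)"
  have "(2::real)^2 \<le> u^2" using u by (intro power_mono) auto
  then have u2: "u^2 \<ge> 4" by simp
  have u2p: "u^2 > 0" using u0 by simp
  have t1: "2/u^2 \<le> 1/2" using u2 u2p by (simp add: pos_divide_le_eq)
  have t2: "0 \<le> 2/u^2" using u2p by simp
  have r2b: "\<bar>r2\<bar> \<le> 2" unfolding r2_def using t1 t2 by (intro abs_ln_le2) linarith+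
  have "u^2 + 2 = u^2 * (1 + 2/u^2)" using u0 by (simp add: field_simps)
  moreover have "ln (u^2 * (1 + 2/u^2)) = ln (u^2) + ln (1 + 2/u^2)"
  proof (rule ln_mult_pos)
    show "0 < u^2" using u2p .
    show "0 < 1 + 2/u^2" using t2 by linarith
  qed
  ultimately have "ln (u^2 + 2) = ln (u^2) + ln (1 + 2/u^2)" by simp
  moreover have "ln (u^2) = 2 * ln u" using u0 by (simp add: ln_realpow)
  ultimately have Leq: "L = 2 * ln u + r2" unfolding L_def LL_def r2_def by simp
  have e1: "s - (p-1)/2 * L - a * ln L = ln q - (p-1)/2 * r2 - ln Cc + ln (p-1)"
    by (rule lin_aux1[OF _ Leq]) (use lnPhi1 lnPhi2 in simp)
  have e2: "\<bar>(p-1)/2 * r2\<bar> \<le> (p-1)/2 * 2"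
  proof -
    have "\<bar>(p-1)/2 * r2\<bar> = (p-1)/2 * \<bar>r2\<bar>" using p by (simp add: abs_mult)
    also have "\<dots> \<le> (p-1)/2 * 2" using r2b p by (intro mult_left_mono) auto
    finally show ?thesis .
  qed
  have A: "\<bar>s - (p-1)/2 * L - a * ln L\<bar> \<le> 4 + (p-1) + \<bar>ln (p-1)\<bar>"
  proof -
    have "\<bar>ln q - (p-1)/2 * r2 - ln Cc + ln (p - 1)\<bar> \<le> 2 + (p-1)/2 * 2 + 2 + \<bar>ln (p-1)\<bar>"
      by (rule abs4[OF lnq e2 lnCc])
    moreover have "2 + (p-1)/2 * 2 + 2 + \<bar>ln (p-1)\<bar> = 4 + (p-1) + \<bar>ln (p-1)\<bar>" by (simp add: field_simps)
    ultimately show ?thesis unfolding e1 by linarith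
  qed
  show ?thesis using A B hdef unfolding L_def C_def Cc_def k_def by simp
qed



lemma endgame1_ev:
  fixes L :: "real \<Rightarrow> real" and c a R :: real
  assumes c: "c > 0" and R: "R \<ge> 0"
    and ev: "eventually (\<lambda>s. \<bar>s - c * L s - a * ln (L s)\<bar> \<le> R) at_top"
    and Linf: "filterlim L at_top at_top"
  shows "\<exists>K. eventually (\<lambda>s. \<bar>1 / L s - (c/s + a*c*ln s/s^2)\<bar> \<le> K / s^2
            \<and> 1 / L s \<le> (3*c/2) / s \<and> s \<ge> 1) at_top"
proof -
  define \<Lambda> where "\<Lambda> = max 1 (max ((8*\<bar>a\<bar>/c)^2) (4*R/c))"
  define K where "K = (4*a^2 + \<bar>a\<bar>*(R + \<bar>a\<bar>*(\<bar>ln (2/(3*c))\<bar> + \<bar>ln (2/c)\<bar>)) + (R + \<bar>a\<bar>*(\<bar>ln (2/(3*c))\<bar> + \<bar>ln (2/c)\<bar>))) * (3*c/2)"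
  have e1: "eventually (\<lambda>s. \<Lambda> \<le> L s) at_top" using Linf unfolding filterlim_at_top by blast
  have e2: "eventually (\<lambda>s::real. 1 \<le> s) at_top" using eventually_ge_at_top[of "1::real"] by simp
  have "eventually (\<lambda>s. \<bar>1 / L s - (c/s + a*c*ln s/s^2)\<bar> \<le> K / s^2
            \<and> 1 / L s \<le> (3*c/2) / s \<and> s \<ge> 1) at_top"
    using ev e1 e2
  proof eventually_elim
    case (elim s)
    have "L s \<ge> max 1 (max ((8*\<bar>a\<bar>/c)^2) (4*R/c))" using elim(2) unfolding \<Lambda>_def .
    from endgame1_pt[OF c R elim(3) this elim(1)] show ?case using elim(3) unfolding K_def by simp
  qed
  then show ?thesis by blast
qed

lemma alg_ii:
  fixes p a s L l :: real
  assumes "p \<noteq> 1" "s \<noteq> 0" "L \<noteq> 0"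
  shows "(1 - (2*a/(p-1))/L)/(p-1) - (1/(p-1))*(1 - a/s - a^2*l/s^2)
       = -((2*a/(p-1))/(p-1)) * (1/L - ((p-1)/2/s + a*((p-1)/2)*l/s^2))"
proof -
  define q where "q = p - 1"
  have q: "q \<noteq> 0" using assms q_def by simp
  have "(1 - (2*a/q)/L)/q - (1/q)*(1 - a/s - a^2*l/s^2)
       = -((2*a/q)/q) * (1/L - (q/2/s + a*(q/2)*l/s^2))"
    using q assms(2,3) by (simp add: field_simps power2_eq_square)
  then show ?thesis unfolding q_def .
qed

lemma alg_i:
  fixes p a s l :: real
  assumes "s \<noteq> 0"
  shows "(p - 1) / (2 * s) + a * (p - 1) * l / (2 * s\<^sup>2) = (p-1)/2/s + a*((p-1)/2)*l/s^2"
  using assms by (simp add: field_simps)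



theorem lemmaA5:
  fixes \<psi> :: "real \<Rightarrow> real" and T p \<alpha> :: real
  assumes "T > 0" and "p > 1"
    and pos: "\<And>t. t < T \<Longrightarrow> \<psi> t > 0"
    and ode: "\<And>t. t < T \<Longrightarrow> (\<psi> has_real_derivative rhs p \<alpha> (\<psi> t)) (at t)"
    and blowup: "filterlim \<psi> at_top (at_left T)"
  shows "(\<lambda>s. 1 / ln ((psi1 \<psi> T s)\<^sup>2 + 2)
              - ((p - 1) / (2 * s) + \<alpha> * (p - 1) * ln s / (2 * s\<^sup>2)))
           \<in> O(\<lambda>s. 1 / s\<^sup>2) \<and>
         (\<lambda>s. hfun \<psi> T p \<alpha> s
              - (1 / (p - 1)) * (1 - \<alpha> / s - \<alpha>\<^sup>2 * ln s / s\<^sup>2))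
           \<in> O(\<lambda>s. 1 / s\<^sup>2)"
proof -
  have p: "p > 1" by fact
  define c where "c = (p-1)/2"
  define k where "k = 2*\<alpha>/(p-1)"
  define u where "u = psi1 \<psi> T"
  define L where "L = (\<lambda>s. LL (u s))"
  define R where "R = 4 + (p-1) + \<bar>ln (p-1)\<bar>"
  have c0: "c > 0" unfolding c_def using p by simp
  have R0: "R \<ge> 0" unfolding R_def using p by simp
  have tlim: "filterlim (\<lambda>s. T - exp (-s)) (at_left T) at_top"
    unfolding filterlim_at
  proof
    show "\<forall>\<^sub>F x in at_top. T - exp (- x) \<in> {..<T} \<and> T - exp (- x) \<noteq> T"
      by (intro always_eventually) auto
    show "((\<lambda>s. T - exp (- s)) \<longlongrightarrow> T) at_top" by real_asymp
  qed
  have uinf: "filterlim u at_top at_top"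
    unfolding u_def psi1_def[abs_def] by (rule filterlim_compose[OF blowup tlim])
  have LLinf: "filterlim LL at_top at_top" unfolding LL_def[abs_def] by real_asymp
  have Linf: "filterlim L at_top at_top" unfolding L_def by (rule filterlim_compose[OF LLinf uinf])
  have ev_u: "eventually (\<lambda>s. 2 \<le> u s) at_top" using uinf unfolding filterlim_at_top by blast
  have ev_L: "eventually (\<lambda>s. 1 + 2*C0 p \<alpha> + 2*\<bar>2*\<alpha>/(p-1)\<bar> \<le> L s) at_top"
    using Linf unfolding filterlim_at_top by blast
  have ev_mid: "eventually (\<lambda>s. \<bar>s - c * L s - \<alpha> * ln (L s)\<bar> \<le> R \<and>
      \<bar>hfun \<psi> T p \<alpha> s - (1 - k / L s)/(p-1)\<bar> \<le> 3 * C0 p \<alpha> / ((p-1) * (L s)^2)) at_top"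
    using ev_u ev_L
  proof eventually_elim
    case (elim s)
    define t where "t = T - exp (-s)"
    have tT: "t < T" unfolding t_def by simp
    have ut: "\<psi> t = u s" unfolding t_def u_def psi1_def by simp
    have "\<bar>Phi p \<alpha> (\<psi> t) - (T - t)\<bar> \<le> C0 p \<alpha> / (LL (\<psi> t))^2 * (T - t)"
      using mvt_bound[OF p pos ode blowup tT] elim(1) ut by simp
    then have M: "\<bar>Phi p \<alpha> (u s) - exp (-s)\<bar> \<le> C0 p \<alpha> / (LL (u s))^2 * exp (-s)"
      unfolding ut by (simp add: t_def)
    have LB: "LL (u s) \<ge> 1 + 2*C0 p \<alpha> + 2*\<bar>2*\<alpha>/(p-1)\<bar>" using elim(2) unfolding L_def by simp
    have "hfun \<psi> T p \<alpha> s = exp (-s) * u s powr (p-1) * ln ((u s)^2+2) powr \<alpha>"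
      unfolding hfun_def u_def by simp
    then show ?case using mid_pt[OF p elim(1) LB M] unfolding L_def c_def k_def R_def by simp
  qed
  have ev_A: "eventually (\<lambda>s. \<bar>s - c * L s - \<alpha> * ln (L s)\<bar> \<le> R) at_top"
    using ev_mid by (rule eventually_mono) simp
  obtain K where K: "eventually (\<lambda>s. \<bar>1 / L s - (c/s + \<alpha>*c*ln s/s^2)\<bar> \<le> K / s^2
            \<and> 1 / L s \<le> (3*c/2) / s \<and> s \<ge> 1) at_top"
    using endgame1_ev[OF c0 R0 ev_A Linf] by blast
  have Lform: "L s = ln ((psi1 \<psi> T s)\<^sup>2 + 2)" for s unfolding L_def u_def LL_def by simp
  have i: "(\<lambda>s. 1 / ln ((psi1 \<psi> T s)\<^sup>2 + 2)
              - ((p - 1) / (2 * s) + \<alpha> * (p - 1) * ln s / (2 * s\<^sup>2))) \<in> O(\<lambda>s. 1 / s\<^sup>2)"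
  proof (rule bigoI)
    show "eventually (\<lambda>s. norm (1 / ln ((psi1 \<psi> T s)\<^sup>2 + 2)
              - ((p - 1) / (2 * s) + \<alpha> * (p - 1) * ln s / (2 * s\<^sup>2))) \<le> K * norm (1 / s\<^sup>2)) at_top"
      using K
    proof eventually_elim
      case (elim s)
      have s0: "s \<noteq> 0" using elim by simp
      have "(p - 1) / (2 * s) + \<alpha> * (p - 1) * ln s / (2 * s\<^sup>2) = c/s + \<alpha>*c*ln s/s^2"
        unfolding c_def by (rule alg_i[OF s0])
      then show ?case using elim unfolding Lform[symmetric] by simp
    qed
  qed
  define K2 where "K2 = 3 * C0 p \<alpha> / (p-1) * (3*c/2)^2 + \<bar>k\<bar>/(p-1) * K"
  have ii: "(\<lambda>s. hfun \<psi> T p \<alpha> s - (1 / (p - 1)) * (1 - \<alpha> / s - \<alpha>\<^sup>2 * ln s / s\<^sup>2)) \<in> O(\<lambda>s. 1 / s\<^sup>2)"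
  proof (rule bigoI)
    show "eventually (\<lambda>s. norm (hfun \<psi> T p \<alpha> s - (1 / (p - 1)) * (1 - \<alpha> / s - \<alpha>\<^sup>2 * ln s / s\<^sup>2))
          \<le> K2 * norm (1 / s\<^sup>2)) at_top"
      using K ev_mid ev_u
    proof eventually_elim
      case (elim s)
      define D where "D = 1 / L s - (c/s + \<alpha>*c*ln s/s^2)"
      define h where "h = hfun \<psi> T p \<alpha> s"
      have s1: "s \<ge> 1" using elim by simp
      have s0: "s \<noteq> 0" using s1 by simp
      have Db: "\<bar>D\<bar> \<le> K / s^2" using elim unfolding D_def by simp
      have iL: "1 / L s \<le> (3*c/2) / s" using elim by simp
      have hb: "\<bar>h - (1 - k / L s)/(p-1)\<bar> \<le> 3 * C0 p \<alpha> / ((p-1) * (L s)^2)" using elim unfolding h_def by simp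
      have L0: "L s > 0" using LL_gt1[of "u s"] elim(3) unfolding L_def by simp
      have C00: "C0 p \<alpha> \<ge> 0" using C0_nonneg[OF p] .
      have eqG: "(1 - k / L s)/(p-1) - (1/(p-1))*(1 - \<alpha>/s - \<alpha>^2*ln s/s^2) = -(k/(p-1)) * D"
        unfolding k_def D_def c_def by (rule alg_ii) (use p s0 L0 in auto)
      have "(1 / L s)^2 \<le> ((3*c/2) / s)^2" using iL L0 by (intro power_mono) auto
      then have "3 * C0 p \<alpha> / (p-1) * (1 / L s)^2 \<le> 3 * C0 p \<alpha> / (p-1) * ((3*c/2) / s)^2"
        using C00 p by (intro mult_left_mono) auto
      moreover have "3 * C0 p \<alpha> / ((p-1) * (L s)^2) = 3 * C0 p \<alpha> / (p-1) * (1 / L s)^2"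
        by (simp add: power_divide)
      moreover have "3 * C0 p \<alpha> / (p-1) * ((3*c/2) / s)^2 = 3 * C0 p \<alpha> / (p-1) * (3*c/2)^2 / s^2"
        by (simp add: power_divide)
      ultimately have t1: "3 * C0 p \<alpha> / ((p-1) * (L s)^2) \<le> 3 * C0 p \<alpha> / (p-1) * (3*c/2)^2 / s^2"
        by simp
      have "\<bar>k/(p-1) * D\<bar> = \<bar>k\<bar>/(p-1) * \<bar>D\<bar>" using p by (simp add: abs_mult)
      also have "\<dots> \<le> \<bar>k\<bar>/(p-1) * (K / s^2)" using Db p by (intro mult_left_mono) auto
      finally have t2: "\<bar>k/(p-1) * D\<bar> \<le> \<bar>k\<bar>/(p-1) * K / s^2" by simp
      have eqH: "h - (1/(p-1))*(1 - \<alpha>/s - \<alpha>^2*ln s/s^2) = (h - (1 - k / L s)/(p-1)) + (-(k/(p-1)) * D)"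
        using eqG by simp
      have tri: "\<bar>h - (1/(p-1))*(1 - \<alpha>/s - \<alpha>^2*ln s/s^2)\<bar> \<le> \<bar>h - (1 - k / L s)/(p-1)\<bar> + \<bar>-(k/(p-1)) * D\<bar>"
        unfolding eqH by (rule abs_triangle_ineq)
      have neg: "\<bar>-(k/(p-1)) * D\<bar> = \<bar>k/(p-1) * D\<bar>" by (simp only: mult_minus_left abs_minus_cancel)
      have "\<bar>h - (1/(p-1))*(1 - \<alpha>/s - \<alpha>^2*ln s/s^2)\<bar> \<le> 3 * C0 p \<alpha> / (p-1) * (3*c/2)^2 / s^2 + \<bar>k\<bar>/(p-1) * K / s^2"
        using tri neg hb t1 t2 by linarith
      also have "\<dots> = K2 * norm (1 / s^2)" unfolding K2_def by (simp add: add_divide_distrib)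
      finally show ?case unfolding h_def by simp
    qed
  qed
  show ?thesis using i ii by blast
qed


end
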